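(* Let $d\ge2$, $n\ge1$, and consider rotor-router aggregation in $\mathbb{Z}^d$ with $n$ particles started at the origin and any initial rotor configuration. Let $u(x)$ be the total number of exits from $x$ made by the $n$ particles, and for a directed edge $(x,y)$ between lattice neighbors let $\kappa(x,y)$ be the number of crossings from $x$ to $y$ minus the number of crossings from $y$ to $x$ made by the $n$ particles. Then for every pair of lattice neighbors $x\sim y$, \[ \big|\,u(y)-u(x)+2d\,\kappa(x,y)\,\big|\le 4d-2. \]
   Context: Rotor-router walk in $\mathbb{Z}^d$: fix a cyclic ordering of the $2d$ unit directions; each site has a rotor pointing in one of them. A particle at $x$ first advances the rotor at $x$ to the next direction in the cyclic order and then steps in that direction. Rotor-router aggregation: $n$ particles start at the origin and are released one at a time; each performs rotor-router walk until reaching a site not occupied by an earlier particle, where it stops. *)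

theory Defs
  imports Main
begin

text \<open>Points of Z^d are represented as functions nat => int vanishing at
  coordinates >= d.\<close>

type_synonym pt = "nat \<Rightarrow> int"

definition zd :: "nat \<Rightarrow> pt set" where
  "zd d = {x. \<forall>i\<ge>d. x i = 0}"

definition origin :: pt where
  "origin = (\<lambda>_. 0)"

definition unit_dirs :: "nat \<Rightarrow> pt set" where
  "unit_dirs d = {v. \<exists>i<d. \<exists>s\<in>{1, -1}. v = (\<lambda>j. if j = i then s else 0)}"

definition lattice_nbrs :: "nat \<Rightarrow> pt \<Rightarrow> pt \<Rightarrow> bool" where
  "lattice_nbrs d x y \<longleftrightarrow> x \<in> zd d \<and> y \<in> zd d \<and> (\<lambda>i. y i - x i) \<in> unit_dirs d"

text \<open>A cyclic ordering of the 2d directions is a bijection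
  e : {0..<2d} -> unit_dirs d; direction index r is followed by (r+1) mod 2d.
  A state of rotor-router aggregation: (rotor configuration, set of occupied sites,
  position of the current particle, number of particles that have stopped).\<close>

type_synonym rr_state = "(pt \<Rightarrow> nat) \<times> pt set \<times> pt \<times> nat"

definition rr_step :: "nat \<Rightarrow> (nat \<Rightarrow> pt) \<Rightarrow> rr_state \<Rightarrow> rr_state" where
  "rr_step d e s = (case s of (\<rho>, A, p, k) \<Rightarrow>
     if p \<in> A then
       (let r = (\<rho> p + 1) mod (2 * d) in (\<rho>(p := r), A, (\<lambda>i. p i + e r i), k))
     else (\<rho>, insert p A, origin, Suc k))"

definition rr_run :: "nat \<Rightarrow> (nat \<Rightarrow> pt) \<Rightarrow> (pt \<Rightarrow> nat) \<Rightarrow> nat \<Rightarrow> rr_state" where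
  "rr_run d e \<rho>0 t = (rr_step d e ^^ t) (\<rho>0, {}, origin, 0)"

definition rr_rotor :: "rr_state \<Rightarrow> pt \<Rightarrow> nat" where "rr_rotor s = fst s"
definition rr_occ :: "rr_state \<Rightarrow> pt set" where "rr_occ s = fst (snd s)"
definition rr_pos :: "rr_state \<Rightarrow> pt" where "rr_pos s = fst (snd (snd s))"
definition rr_settled :: "rr_state \<Rightarrow> nat" where "rr_settled s = snd (snd (snd s))"

text \<open>Times at which one of the first n particles makes an exit (a move) from x.\<close>
definition exit_times :: "nat \<Rightarrow> (nat \<Rightarrow> pt) \<Rightarrow> (pt \<Rightarrow> nat) \<Rightarrow> nat \<Rightarrow> pt \<Rightarrow> nat set" where
  "exit_times d e \<rho>0 n x = {t. rr_settled (rr_run d e \<rho>0 t) < n \<and>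
       rr_pos (rr_run d e \<rho>0 t) = x \<and> rr_pos (rr_run d e \<rho>0 t) \<in> rr_occ (rr_run d e \<rho>0 t)}"

definition exits :: "nat \<Rightarrow> (nat \<Rightarrow> pt) \<Rightarrow> (pt \<Rightarrow> nat) \<Rightarrow> nat \<Rightarrow> pt \<Rightarrow> nat" where
  "exits d e \<rho>0 n x = card (exit_times d e \<rho>0 n x)"

definition crossings :: "nat \<Rightarrow> (nat \<Rightarrow> pt) \<Rightarrow> (pt \<Rightarrow> nat) \<Rightarrow> nat \<Rightarrow> pt \<Rightarrow> pt \<Rightarrow> nat" where
  "crossings d e \<rho>0 n x y = card {t \<in> exit_times d e \<rho>0 n x. rr_pos (rr_run d e \<rho>0 (Suc t)) = y}"

definition kappa :: "nat \<Rightarrow> (nat \<Rightarrow> pt) \<Rightarrow> (pt \<Rightarrow> nat) \<Rightarrow> nat \<Rightarrow> pt \<Rightarrow> pt \<Rightarrow> int" where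
  "kappa d e \<rho>0 n x y = int (crossings d e \<rho>0 n x y) - int (crossings d e \<rho>0 n y x)"

end

theory Submission
  imports Defs
begin

definition cnt :: "(nat \<Rightarrow> bool) \<Rightarrow> nat \<Rightarrow> nat" where
  "cnt Q t = card {s. s < t \<and> Q s}"

lemma cnt_Suc: "cnt Q (Suc t) = cnt Q t + (if Q t then 1 else 0)"
proof -
  have "{s. s < Suc t \<and> Q s} = {s. s < t \<and> Q s} \<union> (if Q t then {t} else {})"
    by (auto simp: less_Suc_eq)
  then show ?thesis unfolding cnt_def by (auto simp: card_insert_if)
qed

lemma cnt_mono: "s \<le> t \<Longrightarrow> cnt Q s \<le> cnt Q t"
  unfolding cnt_def by (rule card_mono) auto

lemma cnt_strict: "s < t \<Longrightarrow> Q s \<Longrightarrow> cnt Q s < cnt Q t"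
proof -
  assume a: "s < t" "Q s"
  have "cnt Q (Suc s) \<le> cnt Q t" using a by (intro cnt_mono) simp
  then show ?thesis using a by (simp add: cnt_Suc)
qed

lemma cnt_bij: "bij_betw (cnt Q) {t. t < L \<and> Q t} {..<cnt Q L}"
proof -
  have inj: "inj_on (cnt Q) {t. t < L \<and> Q t}"
  proof (rule inj_onI)
    fix s t assume "s \<in> {t. t < L \<and> Q t}" "t \<in> {t. t < L \<and> Q t}" "cnt Q s = cnt Q t"
    then show "s = t" using cnt_strict[of s t Q] cnt_strict[of t s Q]
      by (cases s t rule: linorder_cases) auto
  qed
  have sub: "cnt Q ` {t. t < L \<and> Q t} \<subseteq> {..<cnt Q L}"
    using cnt_strict by auto
  have "card (cnt Q ` {t. t < L \<and> Q t}) = cnt Q L"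
    using card_image[OF inj] by (simp add: cnt_def)
  then have "cnt Q ` {t. t < L \<and> Q t} = {..<cnt Q L}"
    using sub by (intro card_subset_eq) auto
  then show ?thesis using inj by (simp add: bij_betw_def)
qed

lemma cnt_card_filter:
  "card {t. t < L \<and> Q t \<and> P (cnt Q t)} = card {k. k < cnt Q L \<and> P k}"
proof -
  have b: "bij_betw (cnt Q) {t. t < L \<and> Q t} {..<cnt Q L}" by (rule cnt_bij)
  have inj: "inj_on (cnt Q) {t. t < L \<and> Q t \<and> P (cnt Q t)}"
    using b unfolding bij_betw_def by (rule inj_on_subset[OF conjunct1]) auto
  have "cnt Q ` {t. t < L \<and> Q t \<and> P (cnt Q t)} = {k. k < cnt Q L \<and> P k}"
  proof
    show "cnt Q ` {t. t < L \<and> Q t \<and> P (cnt Q t)} \<subseteq> {k. k < cnt Q L \<and> P k}"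
      using b unfolding bij_betw_def by auto
  next
    show "{k. k < cnt Q L \<and> P k} \<subseteq> cnt Q ` {t. t < L \<and> Q t \<and> P (cnt Q t)}"
    proof
      fix k assume k: "k \<in> {k. k < cnt Q L \<and> P k}"
      then have "k \<in> cnt Q ` {t. t < L \<and> Q t}" using b unfolding bij_betw_def by auto
      then obtain t where "t < L" "Q t" "k = cnt Q t" by auto
      then show "k \<in> cnt Q ` {t. t < L \<and> Q t \<and> P (cnt Q t)}" using k by auto
    qed
  qed
  then show ?thesis using card_image[OF inj] by simp
qed

lemma card_mod_eq:
  assumes m: "0 < (m::nat)" and c: "c < m"
  shows "card {j. j < v \<and> j mod m = c} = (v + m - 1 - c) div m"
proof -
  let ?N = "v + m - 1 - c"
  have eq: "{j. j < v \<and> j mod m = c} = (\<lambda>q. q*m+c) ` {..<?N div m}"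
  proof
    show "{j. j < v \<and> j mod m = c} \<subseteq> (\<lambda>q. q*m+c) ` {..<?N div m}"
    proof
      fix j assume j: "j \<in> {j. j < v \<and> j mod m = c}"
      have jm: "j mod m = c" using j by simp
      have jd: "j = (j div m) * m + c" using div_mult_mod_eq[of j m] jm by linarith
      have "Suc (j div m) * m \<le> ?N" using j jd c by (simp; linarith)
      then have "Suc (j div m) \<le> ?N div m" using m by (simp add: less_eq_div_iff_mult_less_eq)
      then show "j \<in> (\<lambda>q. q*m+c) ` {..<?N div m}" using jd by (intro image_eqI[of _ _ "j div m"]) auto
    qed
  next
    show "(\<lambda>q. q*m+c) ` {..<?N div m} \<subseteq> {j. j < v \<and> j mod m = c}"
    proof
      fix j assume "j \<in> (\<lambda>q. q*m+c) ` {..<?N div m}"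
      then obtain q where q: "q < ?N div m" "j = q*m+c" by auto
      then have "Suc q \<le> ?N div m" by simp
      then have "Suc q * m \<le> ?N" using m by (simp add: less_eq_div_iff_mult_less_eq)
      then have "j < v" using q c by simp
      moreover have "j mod m = c" using q c by simp
      ultimately show "j \<in> {j. j < v \<and> j mod m = c}" by simp
    qed
  qed
  have "inj_on (\<lambda>q. q*m+c) {..<?N div m}" using m by (intro inj_onI) simp
  then show ?thesis using eq card_image by fastforce
qed

lemma card_mod_bounds:
  assumes m: "0 < (m::nat)" and c: "c < m"
  shows "int m * int (card {k. k < u \<and> (a + k) mod m = c}) \<le> int u + int m - 1
       \<and> int u \<le> int m * int (card {k. k < u \<and> (a + k) mod m = c}) + int m - 1"
proof -
  define F where "F v = card {j. j < v \<and> j mod m = c}" for v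
  have Fb: "int v - int c \<le> int m * int (F v) \<and> int m * int (F v) \<le> int v + int m - 1 - int c" for v
  proof -
    have Fv: "F v = (v + m - 1 - c) div m" unfolding F_def using card_mod_eq[OF m c] .
    have "m * ((v + m - 1 - c) div m) \<le> v + m - 1 - c" by (rule times_div_less_eq_dividend)
    moreover have "v + m - 1 - c < m * ((v + m - 1 - c) div m) + m"
      using mult_div_mod_eq[of m "v + m - 1 - c"] mod_less_divisor[OF m, of "v + m - 1 - c"]
      by linarith
    ultimately have h: "m * F v \<le> v + m - 1 - c" "v + m - 1 - c < m * F v + m" unfolding Fv by auto
    have e1: "int (v + m - 1 - c) = int v + int m - 1 - int c" using c by simp
    have "int (m * F v) \<le> int (v + m - 1 - c)" "int (v + m - 1 - c) < int (m * F v) + int m"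
      using h by linarith+
    then show ?thesis unfolding e1 of_nat_mult by linarith
  qed
  have img: "(\<lambda>k. a + k) ` {k. k < u \<and> (a + k) mod m = c} = {j. j < a + u \<and> j mod m = c} - {j. j < a \<and> j mod m = c}"
  proof
    show "(\<lambda>k. a + k) ` {k. k < u \<and> (a + k) mod m = c} \<subseteq> {j. j < a + u \<and> j mod m = c} - {j. j < a \<and> j mod m = c}"
      by auto
  next
    show "{j. j < a + u \<and> j mod m = c} - {j. j < a \<and> j mod m = c} \<subseteq> (\<lambda>k. a + k) ` {k. k < u \<and> (a + k) mod m = c}"
    proof
      fix j assume "j \<in> {j. j < a + u \<and> j mod m = c} - {j. j < a \<and> j mod m = c}"
      then show "j \<in> (\<lambda>k. a + k) ` {k. k < u \<and> (a + k) mod m = c}"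
        by (intro image_eqI[of _ _ "j - a"]) auto
    qed
  qed
  have "card {k. k < u \<and> (a + k) mod m = c} = card ((\<lambda>k. a + k) ` {k. k < u \<and> (a + k) mod m = c})"
    by (rule card_image[symmetric]) (auto intro: inj_onI)
  also have "\<dots> = F (a + u) - F a" unfolding img F_def
    by (rule card_Diff_subset) auto
  finally have ce: "card {k. k < u \<and> (a + k) mod m = c} = F (a + u) - F a" .
  have "F a \<le> F (a + u)" unfolding F_def by (rule card_mono) auto
  then have "int (card {k. k < u \<and> (a + k) mod m = c}) = int (F (a+u)) - int (F a)" using ce by simp
  then have "int m * int (card {k. k < u \<and> (a + k) mod m = c}) = int m * int (F (a+u)) - int m * int (F a)"
    by (simp add: right_diff_distrib)
  then show ?thesis using Fb[of a] Fb[of "a+u"] by simp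
qed


definition isex :: "nat \<Rightarrow> (nat \<Rightarrow> pt) \<Rightarrow> (pt \<Rightarrow> nat) \<Rightarrow> pt \<Rightarrow> nat \<Rightarrow> bool" where
  "isex d e \<rho>0 z t \<longleftrightarrow> rr_pos (rr_run d e \<rho>0 t) = z \<and> rr_pos (rr_run d e \<rho>0 t) \<in> rr_occ (rr_run d e \<rho>0 t)"

lemma run_Suc: "rr_run d e \<rho>0 (Suc t) = rr_step d e (rr_run d e \<rho>0 t)"
  by (simp add: rr_run_def)

lemma run_0: "rr_run d e \<rho>0 0 = (\<rho>0, {}, origin, 0)"
  by (simp add: rr_run_def)

lemma settled_Suc: "rr_settled (rr_run d e \<rho>0 t) \<le> rr_settled (rr_run d e \<rho>0 (Suc t))"
proof -
  obtain \<rho> A p k where s: "rr_run d e \<rho>0 t = (\<rho>, A, p, k)" by (cases "rr_run d e \<rho>0 t") auto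
  show ?thesis unfolding run_Suc s by (simp add: rr_step_def rr_settled_def Let_def)
qed

lemma settled_mono: "s \<le> t \<Longrightarrow> rr_settled (rr_run d e \<rho>0 s) \<le> rr_settled (rr_run d e \<rho>0 t)"
proof (induction t rule: dec_induct)
  case base then show ?case by simp
next
  case (step t) then show ?case using settled_Suc[of d e \<rho>0 t] by linarith
qed

lemma rotor_Suc: "rr_rotor (rr_run d e \<rho>0 (Suc t)) z =
  (if isex d e \<rho>0 z t then (rr_rotor (rr_run d e \<rho>0 t) z + 1) mod (2*d) else rr_rotor (rr_run d e \<rho>0 t) z)"
proof -
  obtain \<rho> A p k where s: "rr_run d e \<rho>0 t = (\<rho>, A, p, k)" by (cases "rr_run d e \<rho>0 t") auto
  show ?thesis unfolding run_Suc isex_def s by (auto simp: rr_step_def rr_rotor_def rr_pos_def rr_occ_def Let_def)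
qed

lemma pos_Suc: "isex d e \<rho>0 z t \<Longrightarrow> rr_pos (rr_run d e \<rho>0 (Suc t)) =
   (\<lambda>i. z i + e ((rr_rotor (rr_run d e \<rho>0 t) z + 1) mod (2*d)) i)"
proof -
  assume h: "isex d e \<rho>0 z t"
  obtain \<rho> A p k where s: "rr_run d e \<rho>0 t = (\<rho>, A, p, k)" by (cases "rr_run d e \<rho>0 t") auto
  show ?thesis using h unfolding run_Suc isex_def s by (auto simp: rr_step_def rr_rotor_def rr_pos_def rr_occ_def Let_def)
qed

lemma rotor_inv: "rr_rotor (rr_run d e \<rho>0 t) z mod (2*d) = (\<rho>0 z + cnt (isex d e \<rho>0 z) t) mod (2*d)"
proof (induction t)
  case 0 then show ?case by (simp add: run_0 rr_rotor_def cnt_def)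
next
  case (Suc t)
  show ?case
  proof (cases "isex d e \<rho>0 z t")
    case True
    have "rr_rotor (rr_run d e \<rho>0 (Suc t)) z mod (2*d) = (rr_rotor (rr_run d e \<rho>0 t) z + 1) mod (2*d)"
      using True by (simp add: rotor_Suc)
    also have "\<dots> = (rr_rotor (rr_run d e \<rho>0 t) z mod (2*d) + 1) mod (2*d)" by (simp add: mod_Suc_eq)
    also have "\<dots> = ((\<rho>0 z + cnt (isex d e \<rho>0 z) t) mod (2*d) + 1) mod (2*d)" using Suc by simp
    also have "\<dots> = (\<rho>0 z + cnt (isex d e \<rho>0 z) (Suc t)) mod (2*d)"
      using True by (simp add: mod_Suc_eq cnt_Suc)
    finally show ?thesis .
  next
    case False then show ?thesis using Suc by (simp add: rotor_Suc cnt_Suc)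
  qed
qed

lemma pos_Suc2: "isex d e \<rho>0 z t \<Longrightarrow> rr_pos (rr_run d e \<rho>0 (Suc t)) =
   (\<lambda>i. z i + e ((\<rho>0 z + 1 + cnt (isex d e \<rho>0 z) t) mod (2*d)) i)"
proof -
  assume h: "isex d e \<rho>0 z t"
  have "(rr_rotor (rr_run d e \<rho>0 t) z + 1) mod (2*d) = (rr_rotor (rr_run d e \<rho>0 t) z mod (2*d) + 1) mod (2*d)"
    by (simp add: mod_Suc_eq)
  also have "\<dots> = (\<rho>0 z + 1 + cnt (isex d e \<rho>0 z) t) mod (2*d)"
    unfolding rotor_inv by (simp add: mod_Suc_eq add_ac)
  finally show ?thesis using pos_Suc[OF h] by simp
qed

lemma crossings_formula:
  assumes L: "\<And>t. rr_settled (rr_run d e \<rho>0 t) < n \<longleftrightarrow> t < L"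
    and ej: "e j = (\<lambda>i. w i - z i)" and j: "j < 2*d"
    and inj: "inj_on e {..<2*d}" and dpos: "0 < d"
  shows "exits d e \<rho>0 n z = cnt (isex d e \<rho>0 z) L"
    and "crossings d e \<rho>0 n z w = card {k. k < cnt (isex d e \<rho>0 z) L \<and> (\<rho>0 z + 1 + k) mod (2*d) = j}"
proof -
  have E: "exit_times d e \<rho>0 n z = {t. t < L \<and> isex d e \<rho>0 z t}"
    unfolding exit_times_def isex_def using L by auto
  show "exits d e \<rho>0 n z = cnt (isex d e \<rho>0 z) L"
    unfolding exits_def E cnt_def ..
  have "{t \<in> exit_times d e \<rho>0 n z. rr_pos (rr_run d e \<rho>0 (Suc t)) = w}
      = {t. t < L \<and> isex d e \<rho>0 z t \<and> (\<rho>0 z + 1 + cnt (isex d e \<rho>0 z) t) mod (2*d) = j}"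
  proof -
    have "rr_pos (rr_run d e \<rho>0 (Suc t)) = w \<longleftrightarrow> (\<rho>0 z + 1 + cnt (isex d e \<rho>0 z) t) mod (2*d) = j"
      if h: "isex d e \<rho>0 z t" for t
    proof -
      let ?r = "(\<rho>0 z + 1 + cnt (isex d e \<rho>0 z) t) mod (2*d)"
      have r: "?r < 2*d" using dpos by simp
      have "rr_pos (rr_run d e \<rho>0 (Suc t)) = w \<longleftrightarrow> (\<lambda>i. z i + e ?r i) = w"
        using pos_Suc2[OF h] by simp
      also have "\<dots> \<longleftrightarrow> e ?r = e j"
      proof
        assume "(\<lambda>i. z i + e ?r i) = w"
        then show "e ?r = e j" unfolding ej by force
      next
        assume "e ?r = e j"
        then show "(\<lambda>i. z i + e ?r i) = w" unfolding ej by force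
      qed
      also have "\<dots> \<longleftrightarrow> ?r = j" using inj r j by (auto dest: inj_onD)
      finally show ?thesis .
    qed
    then show ?thesis unfolding E by auto
  qed
  then show "crossings d e \<rho>0 n z w = card {k. k < cnt (isex d e \<rho>0 z) L \<and> (\<rho>0 z + 1 + k) mod (2*d) = j}"
    unfolding crossings_def using cnt_card_filter[of L "isex d e \<rho>0 z" "\<lambda>k. (\<rho>0 z + 1 + k) mod (2*d) = j"]
    by simp
qed

lemma lin:
  fixes a b u v D :: int
  assumes "a \<le> u + 2*D - 1" "u \<le> a + 2*D - 1" "b \<le> v + 2*D - 1" "v \<le> b + 2*D - 1"
  shows "\<bar>v - u + (a - b)\<bar> \<le> 4 * D - 2"
  using assms by (simp add: abs_le_iff)

theorem lemma5p1:
  fixes d n :: nat and e :: "nat \<Rightarrow> pt" and \<rho>0 :: "pt \<Rightarrow> nat" and x y :: pt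
  assumes "d \<ge> 2" and "n \<ge> 1"
    and "bij_betw e {..<2 * d} (unit_dirs d)"
    and "\<forall>z\<in>zd d. \<rho>0 z < 2 * d"
    and "\<exists>t. rr_settled (rr_run d e \<rho>0 t) = n"
    and "lattice_nbrs d x y"
  shows "\<bar>int (exits d e \<rho>0 n y) - int (exits d e \<rho>0 n x) + 2 * int d * kappa d e \<rho>0 n x y\<bar>
           \<le> 4 * int d - 2"
proof -
  have dpos: "0 < d" using assms(1) by simp
  obtain T where T: "rr_settled (rr_run d e \<rho>0 T) = n" using assms(5) by blast
  define L where "L = (LEAST t. n \<le> rr_settled (rr_run d e \<rho>0 t))"
  have Lprop: "n \<le> rr_settled (rr_run d e \<rho>0 L)" unfolding L_def using LeastI[of "\<lambda>t. n \<le> rr_settled (rr_run d e \<rho>0 t)" T] T by simp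
  have Lc: "rr_settled (rr_run d e \<rho>0 t) < n \<longleftrightarrow> t < L" for t
  proof
    assume "rr_settled (rr_run d e \<rho>0 t) < n"
    then show "t < L"
    proof (rule contrapos_pp)
      assume "\<not> t < L"
      then have "L \<le> t" by simp
      then have "rr_settled (rr_run d e \<rho>0 L) \<le> rr_settled (rr_run d e \<rho>0 t)" by (rule settled_mono)
      then show "\<not> rr_settled (rr_run d e \<rho>0 t) < n" using Lprop by simp
    qed
  next
    assume "t < L"
    then show "rr_settled (rr_run d e \<rho>0 t) < n" unfolding L_def using not_less_Least[of t "\<lambda>t. n \<le> rr_settled (rr_run d e \<rho>0 t)"] by simp
  qed
  have inj: "inj_on e {..<2*d}" using assms(3) by (simp add: bij_betw_def)
  have img: "e ` {..<2*d} = unit_dirs d" using assms(3) by (simp add: bij_betw_def)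
  have v1: "(\<lambda>i. y i - x i) \<in> unit_dirs d" using assms(6) by (simp add: lattice_nbrs_def)
  have v2: "(\<lambda>i. x i - y i) \<in> unit_dirs d"
  proof -
    obtain i s where i: "i < d" "s \<in> {1, -1}" and f: "(\<lambda>k. y k - x k) = (\<lambda>j. if j = i then s else 0)"
      using v1 unfolding unit_dirs_def by blast
    have "(\<lambda>k. x k - y k) = (\<lambda>j. if j = i then -s else 0)"
    proof
      fix k
      have "y k - x k = (if k = i then s else 0)" using fun_cong[OF f, of k] by simp
      then show "x k - y k = (if k = i then -s else 0)" by (cases "k = i") simp_all
    qed
    moreover have "-s \<in> {1, -1}" using i by auto
    ultimately show ?thesis unfolding unit_dirs_def using i by blast
  qed
  obtain j where j: "j < 2*d" "e j = (\<lambda>i. y i - x i)" using v1 img by (metis (no_types, lifting) imageE lessThan_iff)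
  obtain j' where j': "j' < 2*d" "e j' = (\<lambda>i. x i - y i)" using v2 img by (metis (no_types, lifting) imageE lessThan_iff)
  note cx = crossings_formula[OF Lc j(2) j(1) inj dpos]
  note cy = crossings_formula[OF Lc j'(2) j'(1) inj dpos]
  have m: "0 < 2*d" using dpos by simp
  note bx = card_mod_bounds[OF m j(1), of "cnt (isex d e \<rho>0 x) L" "\<rho>0 x + 1"]
  note by' = card_mod_bounds[OF m j'(1), of "cnt (isex d e \<rho>0 y) L" "\<rho>0 y + 1"]
  define cxy where "cxy = crossings d e \<rho>0 n x y"
  define cyx where "cyx = crossings d e \<rho>0 n y x"
  define ux where "ux = exits d e \<rho>0 n x"
  define uy where "uy = exits d e \<rho>0 n y"
  have B1: "int (2*d) * int cxy \<le> int ux + int (2*d) - 1 \<and> int ux \<le> int (2*d) * int cxy + int (2*d) - 1"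
    using bx unfolding cxy_def ux_def cx by simp
  have B2: "int (2*d) * int cyx \<le> int uy + int (2*d) - 1 \<and> int uy \<le> int (2*d) * int cyx + int (2*d) - 1"
    using by' unfolding cyx_def uy_def cy by simp
  have K: "2 * int d * kappa d e \<rho>0 n x y = int (2*d) * int cxy - int (2*d) * int cyx"
    unfolding kappa_def cxy_def cyx_def by (simp add: right_diff_distrib)
  have i2: "int (2*d) = 2 * int d" by simp
  have B: "2*int d * int cxy \<le> int ux + 2*int d - 1" "int ux \<le> 2*int d * int cxy + 2*int d - 1"
     "2*int d * int cyx \<le> int uy + 2*int d - 1" "int uy \<le> 2*int d * int cyx + 2*int d - 1"
    using B1 B2 unfolding i2 by auto
  have bound: "\<bar>int uy - int ux + (2*int d * int cxy - 2*int d * int cyx)\<bar> \<le> 4 * int d - 2"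
    by (rule lin[OF B])
  have eq: "int (exits d e \<rho>0 n y) - int (exits d e \<rho>0 n x) + 2 * int d * kappa d e \<rho>0 n x y
     = int uy - int ux + (2*int d * int cxy - 2*int d * int cyx)"
    unfolding K i2 ux_def uy_def by (rule refl)
  show ?thesis unfolding eq by (rule bound)
qed

end
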